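(* Let $P$ be a uniform-length histogram polygon with contact tree $T$. Then the base rectangle of $P$ is orientation-fixed with every rectangle on the left spine and on the right spine of $T$.
   Context: Two points $p,q$ of a polygon $P$ see each other if the segment $pq$ does not intersect the exterior of $P$ (visibility along edges and through vertices allowed). A uniform-length histogram polygon is an orthogonal simple polygon with a distinguished horizontal base edge such that $P$ lies above the base edge and is monotone with respect to it, all other boundary edges have the same length, and no three consecutive boundary vertices are collinear; its boundary apart from the base edge is a chain of alternating up- and down-staircases. Every vertical boundary edge on an up-staircase has a companion vertical boundary edge on a down-staircase spanning the same heights such that their four endpoints are the corners of an axis-aligned rectangle inside $P$; these rectangles decompose $P$. The two upper corners of a rectangle are its top vertices and the two lower corners its bottom vertices. The contact tree $T$ has one node per rectangle, two nodes adjacent iff the rectangles touch along a segment of positive length, rooted at the base rectangle (the one containing the base edge); leaves correspond to the rectangles containing tabs (top horizontal boundary edges with two convex endpoints), ordered left to right by position. The left (right) spine of $T$ is the path from the root to the leftmost (rightmost) leaf. Two distinct rectangles $R_1,R_2$ are orientation-fixed if a bottom vertex of one of them sees a top vertex of the other. *)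

theory Defs
  imports "HOL-Analysis.Analysis"
begin

text \<open>
A uniform-length histogram polygon with common edge length L > 0 is represented (up to
isometry) by the list hs of its column heights, measured in units of L.  The boundary apart from the base is the chain
of alternating vertical and horizontal edges, all of length L.
\<close>

definition uniform_hist :: "nat list \<Rightarrow> bool" where
  "uniform_hist hs \<longleftrightarrow> hs \<noteq> [] \<and> hd hs = 1 \<and> last hs = 1 \<and>
     (\<forall>c < length hs. 1 \<le> hs ! c) \<and>
     (\<forall>c. Suc c < length hs \<longrightarrow> hs ! Suc c = hs ! c + 1 \<or> hs ! c = hs ! Suc c + 1)"

definition polygon :: "real \<Rightarrow> nat list \<Rightarrow> (real \<times> real) set" where
  "polygon L hs = {(x, y). 0 \<le> y \<and>
     (\<exists>c < length hs. L * real c \<le> x \<and> x \<le> L * real (Suc c) \<and> y \<le> L * real (hs ! c))}"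

definition sees :: "real \<Rightarrow> nat list \<Rightarrow> real \<times> real \<Rightarrow> real \<times> real \<Rightarrow> bool" where
  "sees L hs p q \<longleftrightarrow> closed_segment p q \<subseteq> polygon L hs"

text \<open>Vertical boundary edge on an up-staircase at x = L*i, going from height L*(k-1)
  to L*k; vertical boundary edge on a down-staircase at x = L*j, from L*k down to L*(k-1).\<close>
definition up_edge :: "nat list \<Rightarrow> nat \<Rightarrow> nat \<Rightarrow> bool" where
  "up_edge hs i k \<longleftrightarrow> i < length hs \<and> hs ! i = k \<and>
     (if i = 0 then k = 1 else hs ! (i - 1) + 1 = k)"

definition down_edge :: "nat list \<Rightarrow> nat \<Rightarrow> nat \<Rightarrow> bool" where
  "down_edge hs j k \<longleftrightarrow> 0 < j \<and> j \<le> length hs \<and> hs ! (j - 1) = k \<and>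
     (if j = length hs then k = 1 else hs ! j + 1 = k)"

definition rbox :: "real \<Rightarrow> nat \<times> nat \<times> nat \<Rightarrow> (real \<times> real) set" where
  "rbox L R = (case R of (i, j, k) \<Rightarrow>
     {(x, y). L * real i \<le> x \<and> x \<le> L * real j \<and> L * (real k - 1) \<le> y \<and> y \<le> L * real k})"

definition rects :: "real \<Rightarrow> nat list \<Rightarrow> (nat \<times> nat \<times> nat) set" where
  "rects L hs = {(i, j, k). up_edge hs i k \<and> down_edge hs j k \<and> i < j \<and>
                            rbox L (i, j, k) \<subseteq> polygon L hs}"

definition top_vertices :: "real \<Rightarrow> nat \<times> nat \<times> nat \<Rightarrow> (real \<times> real) set" where
  "top_vertices L R = (case R of (i, j, k) \<Rightarrow>
     {(L * real i, L * real k), (L * real j, L * real k)})"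

definition bottom_vertices :: "real \<Rightarrow> nat \<times> nat \<times> nat \<Rightarrow> (real \<times> real) set" where
  "bottom_vertices L R = (case R of (i, j, k) \<Rightarrow>
     {(L * real i, L * (real k - 1)), (L * real j, L * (real k - 1))})"

definition orientation_fixed ::
  "real \<Rightarrow> nat list \<Rightarrow> nat \<times> nat \<times> nat \<Rightarrow> nat \<times> nat \<times> nat \<Rightarrow> bool" where
  "orientation_fixed L hs R1 R2 \<longleftrightarrow> R1 \<noteq> R2 \<and>
     ((\<exists>b \<in> bottom_vertices L R1. \<exists>t \<in> top_vertices L R2. sees L hs b t) \<or>
      (\<exists>b \<in> bottom_vertices L R2. \<exists>t \<in> top_vertices L R1. sees L hs b t))"

definition base_rect :: "nat list \<Rightarrow> nat \<times> nat \<times> nat" where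
  "base_rect hs = (0, length hs, 1)"

definition touches :: "real \<Rightarrow> nat \<times> nat \<times> nat \<Rightarrow> nat \<times> nat \<times> nat \<Rightarrow> bool" where
  "touches L R1 R2 \<longleftrightarrow> R1 \<noteq> R2 \<and>
     (\<exists>p q. p \<noteq> q \<and> closed_segment p q \<subseteq> rbox L R1 \<inter> rbox L R2)"

text \<open>Tabs: the top horizontal edge of column c with two convex endpoints.\<close>
definition is_tab :: "nat list \<Rightarrow> nat \<Rightarrow> bool" where
  "is_tab hs c \<longleftrightarrow> c < length hs \<and> (c = 0 \<or> hs ! (c - 1) < hs ! c) \<and>
     (Suc c = length hs \<or> hs ! Suc c < hs ! c)"

definition tab_edge :: "real \<Rightarrow> nat list \<Rightarrow> nat \<Rightarrow> (real \<times> real) set" where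
  "tab_edge L hs c = closed_segment (L * real c, L * real (hs ! c))
                                    (L * real (Suc c), L * real (hs ! c))"

definition leftmost_leaf :: "real \<Rightarrow> nat list \<Rightarrow> nat \<times> nat \<times> nat \<Rightarrow> bool" where
  "leftmost_leaf L hs R \<longleftrightarrow> R \<in> rects L hs \<and>
     tab_edge L hs (LEAST c. is_tab hs c) \<subseteq> rbox L R"

definition rightmost_leaf :: "real \<Rightarrow> nat list \<Rightarrow> nat \<times> nat \<times> nat \<Rightarrow> bool" where
  "rightmost_leaf L hs R \<longleftrightarrow> R \<in> rects L hs \<and>
     tab_edge L hs (GREATEST c. is_tab hs c) \<subseteq> rbox L R"

text \<open>R lies on the (unique, as T is a tree) simple path from a to b in T.\<close>
definition on_path :: "real \<Rightarrow> nat list \<Rightarrow> nat \<times> nat \<times> nat \<Rightarrow> nat \<times> nat \<times> nat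
                        \<Rightarrow> nat \<times> nat \<times> nat \<Rightarrow> bool" where
  "on_path L hs a b R \<longleftrightarrow> (\<exists>ps. ps \<noteq> [] \<and> distinct ps \<and> hd ps = a \<and> last ps = b \<and>
      set ps \<subseteq> rects L hs \<and>
      (\<forall>n. Suc n < length ps \<longrightarrow> touches L (ps ! n) (ps ! Suc n)) \<and> R \<in> set ps)"

definition on_left_spine :: "real \<Rightarrow> nat list \<Rightarrow> nat \<times> nat \<times> nat \<Rightarrow> bool" where
  "on_left_spine L hs R \<longleftrightarrow>
     (\<exists>l. leftmost_leaf L hs l \<and> on_path L hs (base_rect hs) l R)"

definition on_right_spine :: "real \<Rightarrow> nat list \<Rightarrow> nat \<times> nat \<times> nat \<Rightarrow> bool" where
  "on_right_spine L hs R \<longleftrightarrow>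
     (\<exists>l. rightmost_leaf L hs l \<and> on_path L hs (base_rect hs) l R)"

end

theory Submission
  imports Defs
begin

lemma uh_facts:
  assumes "uniform_hist hs"
  shows "hs \<noteq> []" "hs ! 0 = 1" "hs ! (length hs - 1) = 1"
    "\<And>c. c < length hs \<Longrightarrow> 1 \<le> hs ! c"
    "\<And>c. Suc c < length hs \<Longrightarrow> hs ! Suc c = hs ! c + 1 \<or> hs ! c = hs ! Suc c + 1"
  using assms unfolding uniform_hist_def
  by (auto simp: hd_conv_nth last_conv_nth)

lemma lip:
  assumes "uniform_hist hs" "c \<le> d" "d < length hs"
  shows "hs ! d \<le> hs ! c + (d - c) \<and> hs ! c \<le> hs ! d + (d - c)"
  using assms(2,3)
proof (induction d)
  case 0 then show ?case by simp
next
  case (Suc d)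
  show ?case
  proof (cases "c = Suc d")
    case True then show ?thesis by simp
  next
    case False
    then have "c \<le> d" using Suc by simp
    with Suc have IH: "hs ! d \<le> hs ! c + (d - c) \<and> hs ! c \<le> hs ! d + (d - c)" by simp
    from uh_facts(5)[OF assms(1), of d] Suc have "hs ! Suc d = hs ! d + 1 \<or> hs ! d = hs ! Suc d + 1" by simp
    then show ?thesis using IH \<open>c \<le> d\<close> by auto
  qed
qed

lemma in_poly:
  assumes "c < length hs" "L * real c \<le> x" "x \<le> L * real (Suc c)" "0 \<le> y" "y \<le> L * real (hs ! c)"
  shows "(x, y) \<in> polygon L hs"
  using assms unfolding polygon_def by auto

lemma box_heights:
  assumes L: "0 < L" and sub: "rbox L (i, j, k) \<subseteq> polygon L hs" and c: "i \<le> c" "c < j"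
  shows "k \<le> hs ! c"
proof -
  have r1: "real i \<le> real c + 1/2" "real c + 1/2 \<le> real j" using c by auto
  have "L * real i \<le> L * (real c + 1/2)" "L * (real c + 1/2) \<le> L * real j"
    using mult_left_mono[OF r1(1), of L] mult_left_mono[OF r1(2), of L] L by auto
  then have "(L * (real c + 1/2), L * real k) \<in> rbox L (i, j, k)"
    using L unfolding rbox_def by (auto simp: algebra_simps)
  with sub obtain c' where c': "c' < length hs" "L * real c' \<le> L * (real c + 1/2)"
    "L * (real c + 1/2) \<le> L * real (Suc c')" "L * real k \<le> L * real (hs ! c')"
    unfolding polygon_def by auto
  from c' L have a: "real c' \<le> real c + 1/2" "real c + 1/2 \<le> real c' + 1" "real k \<le> real (hs ! c')"
    by (simp_all add: mult_le_cancel_left_pos)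
  from a(1) have "c' \<le> c" by linarith
  moreover from a(2) have "c \<le> c'" by linarith
  ultimately show ?thesis using a(3) by simp
qed

lemma rect_facts:
  assumes L: "0 < L" and uh: "uniform_hist hs" and R: "(i, j, k) \<in> rects L hs"
  shows "i < j" "j \<le> length hs" "hs ! i = k" "hs ! (j - 1) = k"
    "\<And>c. i \<le> c \<Longrightarrow> c < j \<Longrightarrow> k \<le> hs ! c"
    "0 < i \<Longrightarrow> hs ! (i - 1) + 1 = k"
    "j < length hs \<Longrightarrow> hs ! j + 1 = k"
    "1 \<le> k"
proof -
  from R have u: "up_edge hs i k" and d: "down_edge hs j k" and ij: "i < j"
    and sub: "rbox L (i, j, k) \<subseteq> polygon L hs"
    unfolding rects_def by auto
  show "i < j" by fact
  show "j \<le> length hs" using d unfolding down_edge_def by auto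
  show "hs ! i = k" using u unfolding up_edge_def by auto
  show "hs ! (j - 1) = k" using d unfolding down_edge_def by auto
  show "\<And>c. i \<le> c \<Longrightarrow> c < j \<Longrightarrow> k \<le> hs ! c" using box_heights[OF L sub] by blast
  show "0 < i \<Longrightarrow> hs ! (i - 1) + 1 = k" using u unfolding up_edge_def by auto
  show "j < length hs \<Longrightarrow> hs ! j + 1 = k" using d unfolding down_edge_def by auto
  show "1 \<le> k" using u uh_facts(4)[OF uh, of i] unfolding up_edge_def by auto
qed

lemma rect_max:
  assumes L: "0 < L" and uh: "uniform_hist hs" and R: "(i, j, k) \<in> rects L hs"
    and pq: "p \<le> q" "q < length hs" and hi: "\<And>c. p \<le> c \<Longrightarrow> c \<le> q \<Longrightarrow> k \<le> hs ! c"
    and ov: "p \<le> cc" "cc \<le> q" "i \<le> cc" "cc < j"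
  shows "i \<le> p \<and> q < j"
proof (rule conjI; rule ccontr)
  note f = rect_facts[OF L uh R]
  assume "\<not> i \<le> p"
  then have "0 < i" "p \<le> i - 1" "i - 1 \<le> q" using ov by auto
  with hi[of "i - 1"] f(6) show False by simp
next
  note f = rect_facts[OF L uh R]
  assume "\<not> q < j"
  then have "j < length hs" "p \<le> j" "j \<le> q" using ov pq by auto
  with hi[of j] f(7) show False by simp
qed

lemma nesting:
  assumes L: "0 < L" and uh: "uniform_hist hs" and R: "(i, j, k) \<in> rects L hs"
    and R': "(i', j', k') \<in> rects L hs" and kk: "k \<le> k'"
    and ov: "i \<le> cc" "cc < j" "i' \<le> cc" "cc < j'"
  shows "i \<le> i' \<and> j' \<le> j"
proof -
  note f' = rect_facts[OF L uh R']
  have "i \<le> i' \<and> j' - 1 < j"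
  proof (rule rect_max[OF L uh R, of i' "j' - 1" cc])
    fix c assume "i' \<le> c" "c \<le> j' - 1"
    then have "c < j'" using ov by linarith
    then show "k \<le> hs ! c" using f'(5)[of c] \<open>i' \<le> c\<close> kk f'(3) by simp
  qed (use f' ov in auto)
  then show ?thesis by auto
qed



lemma box_mem:
  assumes "(x, y) \<in> rbox L (i, j, k)" "0 < L"
  shows "real i \<le> x / L \<and> x / L \<le> real j \<and> real k - 1 \<le> y / L \<and> y / L \<le> real k"
proof -
  from assms have h: "L * real i \<le> x" "x \<le> L * real j" "L * (real k - 1) \<le> y" "y \<le> L * real k"
    unfolding rbox_def by auto
  then show ?thesis using assms(2)
    by (simp add: pos_le_divide_eq pos_divide_le_eq mult.commute)
qed

lemma touch_facts:
  assumes L: "0 < L" and uh: "uniform_hist hs" and R: "(i, j, k) \<in> rects L hs"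
    and R': "(i', j', k') \<in> rects L hs" and t: "touches L (i, j, k) (i', j', k')"
  shows "(k' = k + 1 \<or> k = k' + 1) \<and> max i i' < min j j'"
proof -
  note f = rect_facts[OF L uh R] and f' = rect_facts[OF L uh R']
  from t obtain p q where ne: "(i, j, k) \<noteq> (i', j', k')" "p \<noteq> q"
    and sub: "closed_segment p q \<subseteq> rbox L (i, j, k) \<inter> rbox L (i', j', k')"
    unfolding touches_def by auto
  obtain x1 y1 x2 y2 where pq: "p = (x1, y1)" "q = (x2, y2)" by (cases p, cases q) auto
  have m: "(x1, y1) \<in> rbox L (i, j, k)" "(x1, y1) \<in> rbox L (i', j', k')"
    "(x2, y2) \<in> rbox L (i, j, k)" "(x2, y2) \<in> rbox L (i', j', k')"
    using sub pq ends_in_segment[of p q] by auto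
  note b = box_mem[OF m(1) L] box_mem[OF m(2) L] box_mem[OF m(3) L] box_mem[OF m(4) L]
  have neq: "x1 / L \<noteq> x2 / L \<or> y1 / L \<noteq> y2 / L"
    using ne(2) pq L by (auto simp: divide_cancel_right)
  have same_eq: "(i, j, k) = (i', j', k')" if "k = k'" "max i i' < min j j'"
  proof -
    have "i \<le> i' \<and> j' \<le> j"
      by (rule nesting[OF L uh R R', of "max i i'"]) (use that in auto)
    moreover have "i' \<le> i \<and> j \<le> j'"
      by (rule nesting[OF L uh R' R, of "max i i'"]) (use that in auto)
    ultimately show ?thesis using that by auto
  qed
  from neq show ?thesis
  proof
    assume "x1 / L \<noteq> x2 / L"
    then have "real i < real j'" "real i' < real j" using b by linarith+
    then have ov: "max i i' < min j j'" using f(1) f'(1) by auto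
    have "real k \<le> real k' + 1" "real k' \<le> real k + 1" using b by linarith+
    then have "k \<le> k' + 1" "k' \<le> k + 1" by linarith+
    moreover have "k \<noteq> k'" using same_eq ov ne(1) by blast
    ultimately show ?thesis using ov by auto
  next
    assume "y1 / L \<noteq> y2 / L"
    then have "real k < real k' + 1" "real k' < real k + 1" using b by linarith+
    then have kk: "k = k'" by linarith
    have "real i \<le> real j'" "real i' \<le> real j" using b by linarith+
    then have ij: "i \<le> j'" "i' \<le> j" by linarith+
    show ?thesis
    proof (cases "i < j' \<and> i' < j")
      case True
      then have "max i i' < min j j'" using f(1) f'(1) by auto
      with same_eq kk ne(1) show ?thesis by blast
    next
      case False
      then have "i = j' \<or> i' = j" using ij by auto
      then show ?thesis
      proof
        assume "i = j'"
        then have "j' < length hs" using f(1) f(2) by auto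
        then show ?thesis using f(3) kk \<open>i = j'\<close> f'(7) by auto
      next
        assume "i' = j"
        then have "j < length hs" using f'(1) f'(2) by auto
        then show ?thesis using f(7) f'(3) kk \<open>i' = j\<close> by auto
      qed
    qed
  qed
qed



definition hinv :: "nat list \<Rightarrow> nat \<Rightarrow> nat \<Rightarrow> nat \<times> nat \<times> nat \<Rightarrow> bool" where
  "hinv hs cs a X = (case X of (i, j, k) \<Rightarrow> \<not> (i \<le> cs \<and> cs < j) \<and> a + 1 \<le> k \<and>
     (\<forall>c. min cs i \<le> c \<and> c \<le> max cs (j - 1) \<longrightarrow> a \<le> hs ! c) \<and>
     (\<exists>c. min cs i \<le> c \<and> c \<le> max cs (j - 1) \<and> hs ! c \<le> a))"

lemma inv_start:
  assumes L: "0 < L" and uh: "uniform_hist hs" and cs: "cs < length hs"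
    and G: "(i, j, k) \<in> rects L hs" and GS: "i \<le> cs \<and> cs < j"
    and X: "(i', j', k') \<in> rects L hs" and XS: "\<not> (i' \<le> cs \<and> cs < j')"
    and t: "touches L (i, j, k) (i', j', k')"
  shows "hinv hs cs k (i', j', k')"
proof -
  note f = rect_facts[OF L uh G] and f' = rect_facts[OF L uh X]
  note tf = touch_facts[OF L uh G X t]
  have kk: "k' = k + 1"
  proof (rule ccontr)
    assume "k' \<noteq> k + 1"
    then have "k = k' + 1" using tf by auto
    then have "i' \<le> i \<and> j \<le> j'"
      using nesting[OF L uh X G, of "max i i'"] tf by auto
    then show False using GS XS by auto
  qed
  have sub: "i \<le> i' \<and> j' \<le> j"
    using nesting[OF L uh G X, of "max i i'"] tf kk by auto
  have A: "\<forall>c. min cs i' \<le> c \<and> c \<le> max cs (j' - 1) \<longrightarrow> k \<le> hs ! c"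
  proof (intro allI impI)
    fix c assume "min cs i' \<le> c \<and> c \<le> max cs (j' - 1)"
    then have "i \<le> c" "c < j" using sub GS f'(1) by auto
    then show "k \<le> hs ! c" using f(5) by auto
  qed
  have B: "\<exists>c. min cs i' \<le> c \<and> c \<le> max cs (j' - 1) \<and> hs ! c \<le> k"
  proof (rule ccontr)
    assume "\<not> ?thesis"
    then have hi: "\<And>c. min cs i' \<le> c \<Longrightarrow> c \<le> max cs (j' - 1) \<Longrightarrow> k' \<le> hs ! c"
      using kk by force
    have "i' \<le> min cs i' \<and> max cs (j' - 1) < j'"
      by (rule rect_max[OF L uh X _ _ hi, where cc = i']) (use f' cs in auto)
    then show False using XS by auto
  qed
  show ?thesis unfolding hinv_def using XS kk A B by auto
qed

lemma inv_step:
  assumes L: "0 < L" and uh: "uniform_hist hs" and cs: "cs < length hs"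
    and X: "(i, j, k) \<in> rects L hs" and inv: "hinv hs cs a (i, j, k)"
    and Y: "(i', j', k') \<in> rects L hs" and YS: "\<not> (i' \<le> cs \<and> cs < j')"
    and t: "touches L (i, j, k) (i', j', k')"
  shows "hinv hs cs a (i', j', k')"
proof -
  note f = rect_facts[OF L uh X] and f' = rect_facts[OF L uh Y]
  note tf = touch_facts[OF L uh X Y t]
  from inv have XS: "\<not> (i \<le> cs \<and> cs < j)" and ak: "a + 1 \<le> k"
    and A: "\<And>c. min cs i \<le> c \<Longrightarrow> c \<le> max cs (j - 1) \<Longrightarrow> a \<le> hs ! c"
    and B: "\<exists>c. min cs i \<le> c \<and> c \<le> max cs (j - 1) \<and> hs ! c \<le> a"
    unfolding hinv_def by auto
  from B obtain w where w: "min cs i \<le> w" "w \<le> max cs (j - 1)" "hs ! w \<le> a" by auto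
  have wout: "\<not> (i \<le> w \<and> w < j)" using f(5)[of w] w ak by auto
  show ?thesis
  proof (cases "k' = k + 1")
    case True
    have sub: "i \<le> i' \<and> j' \<le> j"
      using nesting[OF L uh X Y, of "max i i'"] tf True by auto
    have A': "\<forall>c. min cs i' \<le> c \<and> c \<le> max cs (j' - 1) \<longrightarrow> a \<le> hs ! c"
    proof (intro allI impI)
      fix c assume "min cs i' \<le> c \<and> c \<le> max cs (j' - 1)"
      then have "min cs i \<le> c" "c \<le> max cs (j - 1)" using sub by auto
      then show "a \<le> hs ! c" using A by auto
    qed
    have B': "min cs i' \<le> w \<and> w \<le> max cs (j' - 1)"
      using w wout XS sub f'(1) by auto
    show ?thesis unfolding hinv_def using YS True ak A' B' w(3) by auto
  next
    case False
    then have kk: "k = k' + 1" using tf by auto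
    have sub: "i' \<le> i \<and> j \<le> j'"
      using nesting[OF L uh Y X, of "max i i'"] tf kk by auto
    have ak': "a + 1 \<le> k'"
    proof (rule ccontr)
      assume "\<not> a + 1 \<le> k'"
      then have "k' \<le> a" by auto
      then have hi: "\<And>c. min cs i \<le> c \<Longrightarrow> c \<le> max cs (j - 1) \<Longrightarrow> k' \<le> hs ! c"
        using A order_trans by blast
      have "i' \<le> min cs i \<and> max cs (j - 1) < j'"
        by (rule rect_max[OF L uh Y _ _ hi, where cc = i]) (use f cs sub in auto)
      then show False using YS by auto
    qed
    have A': "\<forall>c. min cs i' \<le> c \<and> c \<le> max cs (j' - 1) \<longrightarrow> a \<le> hs ! c"
    proof (intro allI impI)
      fix c assume c: "min cs i' \<le> c \<and> c \<le> max cs (j' - 1)"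
      show "a \<le> hs ! c"
      proof (cases "i' \<le> c \<and> c < j'")
        case True
        then show ?thesis using f'(5)[of c] ak' by auto
      next
        case False
        then have "min cs i \<le> c" "c \<le> max cs (j - 1)" using c sub YS f(1) by auto
        then show ?thesis using A by auto
      qed
    qed
    have B': "min cs i' \<le> w \<and> w \<le> max cs (j' - 1)"
      using w sub by auto
    show ?thesis unfolding hinv_def using YS ak' A' B' w(3) by auto
  qed
qed

lemma inv_hit:
  assumes L: "0 < L" and uh: "uniform_hist hs"
    and X: "(i, j, k) \<in> rects L hs" and inv: "hinv hs cs a (i, j, k)"
    and G: "(i', j', k') \<in> rects L hs" and GS: "i' \<le> cs \<and> cs < j'"
    and t: "touches L (i, j, k) (i', j', k')"
  shows "k' = a"
proof -
  note f = rect_facts[OF L uh X] and f' = rect_facts[OF L uh G]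
  note tf = touch_facts[OF L uh X G t]
  from inv have XS: "\<not> (i \<le> cs \<and> cs < j)" and ak: "a + 1 \<le> k"
    and B: "\<exists>c. min cs i \<le> c \<and> c \<le> max cs (j - 1) \<and> hs ! c \<le> a"
    unfolding hinv_def by auto
  have kk: "k = k' + 1"
  proof (rule ccontr)
    assume "k \<noteq> k' + 1"
    then have "k' = k + 1" using tf by auto
    then have "i \<le> i' \<and> j' \<le> j"
      using nesting[OF L uh X G, of "max i i'"] tf by auto
    then show False using GS XS by auto
  qed
  have sub: "i' \<le> i \<and> j \<le> j'"
    using nesting[OF L uh G X, of "max i i'"] tf kk by auto
  from B obtain w where w: "min cs i \<le> w" "w \<le> max cs (j - 1)" "hs ! w \<le> a" by auto
  have "i' \<le> w" "w < j'" using w sub GS f(1) by auto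
  then have "k' \<le> a" using f'(5)[of w] w(3) by auto
  then show ?thesis using kk ak by auto
qed

lemma S_unique:
  assumes L: "0 < L" and uh: "uniform_hist hs"
    and G: "(i, j, k) \<in> rects L hs" and GS: "i \<le> cs \<and> cs < j"
    and G': "(i', j', k) \<in> rects L hs" and GS': "i' \<le> cs \<and> cs < j'"
  shows "(i, j, k) = (i', j', k)"
  using nesting[OF L uh G G', of cs] nesting[OF L uh G' G, of cs] GS GS' by auto



definition inS :: "nat \<Rightarrow> nat \<times> nat \<times> nat \<Rightarrow> bool" where
  "inS cs X = (fst X \<le> cs \<and> cs < fst (snd X))"

lemma inv_start':
  assumes "0 < L" "uniform_hist hs" "cs < length hs" "G \<in> rects L hs" "inS cs G"
    "X \<in> rects L hs" "\<not> inS cs X" "touches L G X"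
  shows "hinv hs cs (snd (snd G)) X"
proof -
  obtain i j k where G: "G = (i, j, k)" by (cases G) auto
  obtain i' j' k' where X: "X = (i', j', k')" by (cases X) auto
  show ?thesis using inv_start[of L hs cs i j k i' j' k'] assms unfolding G X inS_def by auto
qed

lemma inv_step':
  assumes "0 < L" "uniform_hist hs" "cs < length hs" "X \<in> rects L hs" "hinv hs cs a X"
    "Y \<in> rects L hs" "\<not> inS cs Y" "touches L X Y"
  shows "hinv hs cs a Y"
proof -
  obtain i j k where X: "X = (i, j, k)" by (cases X) auto
  obtain i' j' k' where Y: "Y = (i', j', k')" by (cases Y) auto
  show ?thesis using inv_step[of L hs cs i j k a i' j' k'] assms unfolding X Y inS_def by auto
qed

lemma inv_hit':
  assumes "0 < L" "uniform_hist hs" "X \<in> rects L hs" "hinv hs cs a X"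
    "G \<in> rects L hs" "inS cs G" "touches L X G"
  shows "snd (snd G) = a"
proof -
  obtain i j k where X: "X = (i, j, k)" by (cases X) auto
  obtain i' j' k' where G: "G = (i', j', k')" by (cases G) auto
  show ?thesis using inv_hit[of L hs i j k cs a i' j' k'] assms unfolding X G inS_def by auto
qed

lemma S_unique':
  assumes "0 < L" "uniform_hist hs" "G \<in> rects L hs" "inS cs G"
    "G' \<in> rects L hs" "inS cs G'" "snd (snd G) = snd (snd G')"
  shows "G = G'"
proof -
  obtain i j k where G: "G = (i, j, k)" by (cases G) auto
  obtain i' j' k' where G': "G' = (i', j', k')" by (cases G') auto
  show ?thesis using S_unique[of L hs i j k cs i' j'] assms unfolding G G' inS_def by auto
qed

lemma hinv_notS: "hinv hs cs a X \<Longrightarrow> \<not> inS cs X"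
  unfolding hinv_def inS_def by (cases X) auto

lemma path_in_S:
  assumes L: "0 < L" and uh: "uniform_hist hs" and cs: "cs < length hs"
    and ne: "ps \<noteq> []" and dist: "distinct ps" and sub: "set ps \<subseteq> rects L hs"
    and tch: "\<forall>n. Suc n < length ps \<longrightarrow> touches L (ps ! n) (ps ! Suc n)"
    and hd: "inS cs (hd ps)" and lst: "inS cs (last ps)"
  shows "\<forall>s < length ps. inS cs (ps ! s)"
proof (intro allI impI)
  fix s assume "s < length ps"
  then show "inS cs (ps ! s)"
  proof (induction s)
    case 0 then show ?case using hd ne by (simp add: hd_conv_nth)
  next
    case (Suc s)
    then have IH: "inS cs (ps ! s)" by simp
    show ?case
    proof (rule ccontr)
      assume nS: "\<not> inS cs (ps ! Suc s)"
      define a where "a = snd (snd (ps ! s))"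
      have mem: "\<And>m. m < length ps \<Longrightarrow> ps ! m \<in> rects L hs" using sub by auto
      have claim: "\<forall>r. Suc s + r < length ps \<longrightarrow> hinv hs cs a (ps ! (Suc s + r))"
      proof (intro allI)
        fix r show "Suc s + r < length ps \<longrightarrow> hinv hs cs a (ps ! (Suc s + r))"
        proof (induction r)
          case 0
          show ?case using inv_start'[OF L uh cs mem[of s] IH mem[of "Suc s"] nS] tch Suc.prems
            unfolding a_def by auto
        next
          case (Suc r)
          show ?case
          proof
            assume lt: "Suc s + Suc r < length ps"
            then have iv: "hinv hs cs a (ps ! (Suc s + r))" using Suc.IH by simp
            have t: "touches L (ps ! (Suc s + r)) (ps ! Suc (Suc s + r))" using tch lt by auto
            show "hinv hs cs a (ps ! (Suc s + Suc r))"
            proof (cases "inS cs (ps ! Suc (Suc s + r))")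
              case True
              have "snd (snd (ps ! Suc (Suc s + r))) = a"
                using inv_hit'[OF L uh mem iv mem True t] lt by auto
              then have "ps ! Suc (Suc s + r) = ps ! s"
                using S_unique'[OF L uh mem True mem IH] lt Suc.prems unfolding a_def by auto
              then have "Suc (Suc s + r) = s"
                using nth_eq_iff_index_eq[OF dist] lt Suc.prems by auto
              then show ?thesis by simp
            next
              case False
              then show ?thesis using inv_step'[OF L uh cs mem iv mem False t] lt by auto
            qed
          qed
        qed
      qed
      have "hinv hs cs a (ps ! (Suc s + (length ps - 1 - Suc s)))"
        using claim[rule_format, of "length ps - 1 - Suc s"] Suc.prems by linarith
      moreover have "Suc s + (length ps - 1 - Suc s) = length ps - 1" using Suc.prems by auto
      ultimately have "hinv hs cs a (ps ! (length ps - 1))" by metis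
      then have "hinv hs cs a (last ps)" using ne by (simp add: last_conv_nth)
      then show False using lst hinv_notS by blast
    qed
  qed
qed



lemma stair_left:
  assumes uh: "uniform_hist hs"
  shows "c \<le> (LEAST c. is_tab hs c) \<Longrightarrow> c < length hs \<Longrightarrow> hs ! c = c + 1"
proof (induction c)
  case 0 then show ?case using uh_facts[OF uh] by simp
next
  case (Suc c)
  then have IH: "hs ! c = c + 1" and cl: "c < (LEAST c. is_tab hs c)" by auto
  have "\<not> is_tab hs c" using not_less_Least[OF cl] .
  have prev: "c = 0 \<or> hs ! (c - 1) < hs ! c"
  proof (cases c)
    case 0 then show ?thesis by simp
  next
    case (Suc c')
    have "hs ! c' \<le> hs ! 0 + (c' - 0)" using lip[OF uh, of 0 c'] Suc \<open>Suc c < length hs\<close> by simp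
    then have "hs ! c' \<le> c' + 1" using uh_facts(2)[OF uh] by simp
    then show ?thesis using IH Suc by simp
  qed
  have "hs ! Suc c = hs ! c + 1 \<or> hs ! c = hs ! Suc c + 1" using uh_facts(5)[OF uh] Suc.prems by simp
  moreover have "\<not> hs ! c = hs ! Suc c + 1"
  proof
    assume "hs ! c = hs ! Suc c + 1"
    then have "is_tab hs c" using prev Suc.prems unfolding is_tab_def by auto
    with \<open>\<not> is_tab hs c\<close> show False by simp
  qed
  ultimately show ?case using IH by simp
qed

lemma stair_right:
  assumes uh: "uniform_hist hs"
  shows "(GREATEST c. is_tab hs c) \<le> c \<Longrightarrow> c < length hs \<Longrightarrow> hs ! c = length hs - c"
proof (induction "length hs - c" arbitrary: c rule: less_induct)
  case less
  show ?case
  proof (cases "Suc c = length hs")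
    case True
    then show ?thesis using uh_facts(3)[OF uh] by (simp add: True[symmetric])
  next
    case False
    then have c1: "Suc c < length hs" using less.prems by simp
    have IH: "hs ! Suc c = length hs - Suc c" using less.hyps[of "Suc c"] less.prems c1 by simp
    have "hs ! Suc c = hs ! c + 1 \<or> hs ! c = hs ! Suc c + 1" using uh_facts(5)[OF uh] c1 by simp
    moreover have "\<not> hs ! Suc c = hs ! c + 1"
    proof
      assume up: "hs ! Suc c = hs ! c + 1"
      have nxt: "Suc (Suc c) = length hs \<or> hs ! Suc (Suc c) < hs ! Suc c"
      proof (cases "Suc (Suc c) < length hs")
        case True
        have "hs ! Suc (Suc c) \<le> hs ! (length hs - 1) + (length hs - 1 - Suc (Suc c))"
          using lip[OF uh, of "Suc (Suc c)" "length hs - 1"] True by auto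
        then show ?thesis using uh_facts(3)[OF uh] IH True by auto
      qed (use c1 in auto)
      have tab: "is_tab hs (Suc c)" unfolding is_tab_def using c1 up nxt by auto
      have "Suc c \<le> (GREATEST c. is_tab hs c)"
        by (rule Greatest_le_nat[of "is_tab hs" "Suc c" "length hs"]) (use tab in \<open>auto simp: is_tab_def\<close>)
      then show False using less.prems by simp
    qed
    ultimately show ?thesis using IH c1 by auto
  qed
qed

lemma col_exists:
  assumes "0 \<le> t" "t \<le> real j" "0 < j"
  shows "\<exists>c<j. real c \<le> t \<and> t \<le> real c + 1"
proof (cases "t < real j")
  case True
  show ?thesis
    by (rule exI[of _ "nat \<lfloor>t\<rfloor>"]) (use True assms in \<open>auto simp: of_nat_nat\<close>, linarith+)
next
  case False
  then show ?thesis using assms by (intro exI[of _ "j - 1"]) (auto simp: of_nat_diff)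
qed



lemma seg_param:
  assumes "z \<in> closed_segment (a1::real, a2::real) (b1, b2)"
  obtains u where "0 \<le> u" "u \<le> 1" "z = (a1 + u * (b1 - a1), a2 + u * (b2 - a2))"
  using assms unfolding closed_segment_def by (auto simp: algebra_simps)

lemma vis_left:
  assumes L: "0 < L" and uh: "uniform_hist hs" and R: "(i, j, k) \<in> rects L hs" and ki: "k = i + 1"
  shows "sees L hs (0, 0) (L * real j, L * real k)"
  unfolding sees_def
proof
  note f = rect_facts[OF L uh R]
  fix z assume "z \<in> closed_segment (0, 0) (L * real j, L * real k)"
  then obtain u where u: "0 \<le> u" "u \<le> 1" "z = (u * (L * real j), u * (L * real k))"
    by (rule seg_param) auto
  define t where "t = u * real j"
  have t0: "0 \<le> t" "t \<le> real j" unfolding t_def using u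
    by (auto simp: mult_le_cancel_right1 mult_left_le_one_le)
  obtain c where c: "c < j" "real c \<le> t" "t \<le> real c + 1"
    using col_exists[OF t0] f(1) by auto
  have kj: "k \<le> j" using ki f(1) by simp
  have hc: "u * real k \<le> real (hs ! c)"
  proof (cases "i \<le> c")
    case True
    then have "k \<le> hs ! c" using f(5) c by auto
    moreover have "u * real k \<le> real k" using u by (simp add: mult_left_le_one_le)
    ultimately show ?thesis by linarith
  next
    case False
    have "hs ! i \<le> hs ! c + (i - c)" using lip[OF uh, of c i] False f(1,2) by auto
    then have "c + 1 \<le> hs ! c" using f(3) ki False by auto
    moreover have "u * real k \<le> u * real j" using kj u by (simp add: mult_left_mono)
    ultimately show ?thesis using c t_def by linarith
  qed
  show "z \<in> polygon L hs"
    unfolding u(3)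
  proof (rule in_poly[of c])
    show "c < length hs" using c f(2) by auto
    show "L * real c \<le> u * (L * real j)" using c t_def L by (simp add: mult_left_mono)
    have "L * t \<le> L * (real c + 1)" using c L by (simp add: mult_left_mono)
    then show "u * (L * real j) \<le> L * real (Suc c)" using t_def by (simp add: algebra_simps)
    show "0 \<le> u * (L * real k)" using u L by simp
    have "L * (u * real k) \<le> L * real (hs ! c)" using hc L by (simp add: mult_left_mono)
    then show "u * (L * real k) \<le> L * real (hs ! c)" by (simp add: algebra_simps)
  qed
qed

lemma vis_right:
  assumes L: "0 < L" and uh: "uniform_hist hs" and R: "(i, j, k) \<in> rects L hs"
    and kj: "k + j = length hs + 1"
  shows "sees L hs (L * real (length hs), 0) (L * real i, L * real k)"
  unfolding sees_def
proof
  note f = rect_facts[OF L uh R]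
  let ?n = "length hs"
  fix z assume "z \<in> closed_segment (L * real ?n, 0) (L * real i, L * real k)"
  then obtain u where u: "0 \<le> u" "u \<le> 1"
    "z = (L * real ?n + u * (L * real i - L * real ?n), u * (L * real k))"
    by (rule seg_param) auto
  define t where "t = real ?n - u * (real ?n - real i)"
  have ni: "real i \<le> real ?n" using f(1,2) by simp
  have zx: "L * real ?n + u * (L * real i - L * real ?n) = L * t" unfolding t_def by (simp add: algebra_simps)
  have s0: "0 \<le> t - real i" "t - real i \<le> real (?n - i)"
  proof -
    have e: "t - real i = (1 - u) * (real ?n - real i)" unfolding t_def by (simp add: algebra_simps)
    have "0 \<le> 1 - u" "1 - u \<le> 1" "0 \<le> real ?n - real i" using u ni by auto
    then have "0 \<le> (1 - u) * (real ?n - real i)" "(1 - u) * (real ?n - real i) \<le> real ?n - real i"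
      by (simp_all add: mult_left_le_one_le)
    then show "0 \<le> t - real i" "t - real i \<le> real (?n - i)" using e ni by (simp_all add: of_nat_diff)
  qed
  obtain c' where c': "c' < ?n - i" "real c' \<le> t - real i" "t - real i \<le> real c' + 1"
    using col_exists[OF s0] f(1,2) by auto
  define c where "c = i + c'"
  have c: "c < ?n" "real c \<le> t" "t \<le> real c + 1" "i \<le> c" using c' unfolding c_def by auto
  have kn: "k \<le> ?n - i" using kj f(1) by simp
  have hc: "u * real k \<le> real (hs ! c)"
  proof (cases "c < j")
    case True
    then have "k \<le> hs ! c" using f(5) c by auto
    moreover have "u * real k \<le> real k" using u by (simp add: mult_left_le_one_le)
    ultimately show ?thesis by linarith
  next
    case False
    have jc: "j - 1 \<le> c" using False by linarith
    have "hs ! c \<le> hs ! (j - 1) + (c - (j - 1)) \<and> hs ! (j - 1) \<le> hs ! c + (c - (j - 1))"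
      by (rule lip[OF uh jc c(1)])
    then have "k \<le> hs ! c + (c - (j - 1))" using f(4) by simp
    then have "?n - c \<le> hs ! c" using kj False f(1) by linarith
    then have "real ?n - real c \<le> real (hs ! c)" using c(1) by (simp add: of_nat_diff)
    moreover have "real k \<le> real ?n - real i" using kn ni by (simp add: of_nat_diff)
    then have "u * real k \<le> u * (real ?n - real i)" using u by (simp add: mult_left_mono)
    ultimately show ?thesis using c t_def by linarith
  qed
  show "z \<in> polygon L hs"
    unfolding u(3) zx
  proof (rule in_poly[of c])
    show "c < length hs" using c by auto
    show "L * real c \<le> L * t" using c L by (simp add: mult_left_mono)
    have "L * t \<le> L * (real c + 1)" using c L by (simp add: mult_left_mono)
    then show "L * t \<le> L * real (Suc c)" by (simp add: algebra_simps)
    show "0 \<le> u * (L * real k)" using u L by simp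
    have "L * (u * real k) \<le> L * real (hs ! c)" using hc L by (simp add: mult_left_mono)
    then show "u * (L * real k) \<le> L * real (hs ! c)" by (simp add: algebra_simps)
  qed
qed



lemma leaf_cols:
  assumes L: "0 < L" and sub: "tab_edge L hs c \<subseteq> rbox L (i, j, k)"
  shows "i \<le> c \<and> c < j"
proof -
  have "(L * real c, L * real (hs ! c)) \<in> rbox L (i, j, k)"
       "(L * real (Suc c), L * real (hs ! c)) \<in> rbox L (i, j, k)"
    using sub ends_in_segment unfolding tab_edge_def by blast+
  then have "L * real i \<le> L * real c" "L * real (Suc c) \<le> L * real j"
    unfolding rbox_def by auto
  then show ?thesis using L by (simp add: mult_le_cancel_left_pos)
qed

lemma spine_S:
  assumes L: "0 < L" and uh: "uniform_hist hs"
    and l: "l \<in> rects L hs" "inS cs l"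
    and p: "on_path L hs (base_rect hs) l R"
  shows "R \<in> rects L hs \<and> inS cs R"
proof -
  from p obtain ps where ps: "ps \<noteq> []" "distinct ps" "hd ps = base_rect hs" "last ps = l"
    "set ps \<subseteq> rects L hs" "\<forall>n. Suc n < length ps \<longrightarrow> touches L (ps ! n) (ps ! Suc n)"
    "R \<in> set ps" unfolding on_path_def by blast
  obtain i j k where lt: "l = (i, j, k)" by (cases l) auto
  have cs: "cs < length hs" using l rect_facts(2)[OF L uh, of i j k] unfolding lt inS_def by auto
  have "inS cs (hd ps)" using ps(3) cs unfolding base_rect_def inS_def by simp
  then have "\<forall>s < length ps. inS cs (ps ! s)"
    using path_in_S[OF L uh cs ps(1,2,5,6)] ps(4) l(2) by simp
  then show ?thesis using ps(5,7) by (metis in_set_conv_nth subsetD)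
qed

theorem lemma14:
  fixes L :: real and hs :: "nat list" and R :: "nat \<times> nat \<times> nat"
  assumes "0 < L" and "uniform_hist hs"
    and "on_left_spine L hs R \<or> on_right_spine L hs R"
    and "R \<noteq> base_rect hs"
  shows "orientation_fixed L hs (base_rect hs) R"
proof -
  note L = assms(1) and uh = assms(2)
  obtain i j k where Rt: "R = (i, j, k)" by (cases R) auto
  from assms(3) show ?thesis
  proof
    assume "on_left_spine L hs R"
    then obtain l where l: "leftmost_leaf L hs l" "on_path L hs (base_rect hs) l R"
      unfolding on_left_spine_def by blast
    define c0 where "c0 = (LEAST c. is_tab hs c)"
    obtain il jl kl where lt: "l = (il, jl, kl)" by (cases l) auto
    have lr: "l \<in> rects L hs" and ls: "inS c0 l"
      using l(1) leaf_cols[OF L, of hs c0 il jl kl] unfolding leftmost_leaf_def c0_def[symmetric] lt inS_def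
      by auto
    from spine_S[OF L uh lr ls l(2)] have RR: "(i, j, k) \<in> rects L hs" "i \<le> c0" "c0 < j"
      unfolding Rt inS_def by auto
    note f = rect_facts[OF L uh RR(1)]
    have "hs ! i = i + 1" using stair_left[OF uh, of i] RR f(1,2) unfolding c0_def by auto
    then have ki: "k = i + 1" using f(3) by simp
    have "sees L hs (0, 0) (L * real j, L * real k)" by (rule vis_left[OF L uh RR(1) ki])
    then show ?thesis using assms(4) unfolding orientation_fixed_def Rt base_rect_def
        bottom_vertices_def top_vertices_def by auto
  next
    assume "on_right_spine L hs R"
    then obtain l where l: "rightmost_leaf L hs l" "on_path L hs (base_rect hs) l R"
      unfolding on_right_spine_def by blast
    define c1 where "c1 = (GREATEST c. is_tab hs c)"
    obtain il jl kl where lt: "l = (il, jl, kl)" by (cases l) auto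
    have lr: "l \<in> rects L hs" and ls: "inS c1 l"
      using l(1) leaf_cols[OF L, of hs c1 il jl kl] unfolding rightmost_leaf_def c1_def[symmetric] lt inS_def
      by auto
    from spine_S[OF L uh lr ls l(2)] have RR: "(i, j, k) \<in> rects L hs" "i \<le> c1" "c1 < j"
      unfolding Rt inS_def by auto
    note f = rect_facts[OF L uh RR(1)]
    have "hs ! (j - 1) = length hs - (j - 1)"
      using stair_right[OF uh, of "j - 1"] RR f(1,2) unfolding c1_def by auto
    then have kj: "k + j = length hs + 1" using f(1,2,4) by auto
    have "sees L hs (L * real (length hs), 0) (L * real i, L * real k)" by (rule vis_right[OF L uh RR(1) kj])
    then show ?thesis using assms(4) unfolding orientation_fixed_def Rt base_rect_def
        bottom_vertices_def top_vertices_def by auto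
  qed
qed

end
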